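(* Let $M=(W,\bm{\Box},V)$ be a transitive neighborhood model and $\Sigma$ a set of formulas closed under subformulas. Then the transitive filtration $M^{T}_f=(W_f,\bm{\Box}^{T}_f,V_f)$ of $M$ through $\Sigma$ is transitive: $\bm{\Box}^{T}_fX\subseteq\bm{\Box}^{T}_f\bm{\Box}^{T}_fX$ for all $X\subseteq W_f$.
   Context: A neighborhood model is $M=(W,\bm{\Box},V)$ with $W\neq\varnothing$, $\bm{\Box}:\mathcal P(W)\to\mathcal P(W)$, $V:Var\to\mathcal P(W)$; truth sets: $|p|_M=V(p)$, $|\neg\varphi|_M=W\setminus|\varphi|_M$, $|\varphi\wedge\psi|_M=|\varphi|_M\cap|\psi|_M$, $|\Box\varphi|_M=\bm{\Box}|\varphi|_M$. $M$ is transitive if $\bm{\Box}X\subseteq\bm{\Box}\bm{\Box}X$ for all $X\subseteq W$. For $\Sigma$ closed under subformulas, $w\sim v$ iff $w,v$ satisfy the same formulas of $\Sigma$; $\widetilde w$ is the class of $w$, $W_f=\{\widetilde w:w\in W\}$, $\widetilde X=\{\widetilde w:w\in X\}$, $V_f(p)=\widetilde{|p|}_M$. The minimal filtration has $\bm{\Box}^{-}_fX=\widetilde{|\Box\varphi|}_M$ if $X=\widetilde{|\varphi|}_M$ for some formula $\Box\varphi\in\Sigma$, and $\bm{\Box}^{-}_fX=\varnothing$ otherwise. For a function $\bm{\Box}':\mathcal P(U)\to\mathcal P(U)$, $\widehat{\bm{\Box}'}X=X$ if $X=\bm{\Box}'Y$ for some $Y\subseteq U$, and $\varnothing$ otherwise.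 The transitive filtration is $M^{T}_f=(W_f,\bm{\Box}^{T}_f,V_f)$ with $\bm{\Box}^{T}_fX=\bm{\Box}^{-}_fX\cup\widehat{\bm{\Box}^{-}_f}X$. *)

theory Defs
  imports Main
begin

datatype 'v fm = Var 'v | Neg "'v fm" | Conj "'v fm" "'v fm" | Box "'v fm"

definition nbhd_model :: "'w set \<Rightarrow> ('w set \<Rightarrow> 'w set) \<Rightarrow> ('v \<Rightarrow> 'w set) \<Rightarrow> bool" where
  "nbhd_model W bx V \<longleftrightarrow> W \<noteq> {} \<and> (\<forall>X. X \<subseteq> W \<longrightarrow> bx X \<subseteq> W) \<and> (\<forall>p. V p \<subseteq> W)"

fun truth :: "'w set \<Rightarrow> ('w set \<Rightarrow> 'w set) \<Rightarrow> ('v \<Rightarrow> 'w set) \<Rightarrow> 'v fm \<Rightarrow> 'w set" where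
  "truth W bx V (Var p) = V p"
| "truth W bx V (Neg \<phi>) = W - truth W bx V \<phi>"
| "truth W bx V (Conj \<phi> \<psi>) = truth W bx V \<phi> \<inter> truth W bx V \<psi>"
| "truth W bx V (Box \<phi>) = bx (truth W bx V \<phi>)"

definition transitive_model :: "'w set \<Rightarrow> ('w set \<Rightarrow> 'w set) \<Rightarrow> bool" where
  "transitive_model W bx \<longleftrightarrow> (\<forall>X. X \<subseteq> W \<longrightarrow> bx X \<subseteq> bx (bx X))"

fun subformulas :: "'v fm \<Rightarrow> 'v fm set" where
  "subformulas (Var p) = {Var p}"
| "subformulas (Neg \<phi>) = insert (Neg \<phi>) (subformulas \<phi>)"
| "subformulas (Conj \<phi> \<psi>) = insert (Conj \<phi> \<psi>) (subformulas \<phi> \<union> subformulas \<psi>)"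
| "subformulas (Box \<phi>) = insert (Box \<phi>) (subformulas \<phi>)"

definition subformula_closed :: "'v fm set \<Rightarrow> bool" where
  "subformula_closed \<Sigma> \<longleftrightarrow> (\<forall>\<phi>\<in>\<Sigma>. subformulas \<phi> \<subseteq> \<Sigma>)"

definition cls :: "'w set \<Rightarrow> ('w set \<Rightarrow> 'w set) \<Rightarrow> ('v \<Rightarrow> 'w set) \<Rightarrow> 'v fm set \<Rightarrow> 'w \<Rightarrow> 'w set" where
  "cls W bx V \<Sigma> w = {v \<in> W. \<forall>\<phi>\<in>\<Sigma>. (w \<in> truth W bx V \<phi>) = (v \<in> truth W bx V \<phi>)}"

definition Wf :: "'w set \<Rightarrow> ('w set \<Rightarrow> 'w set) \<Rightarrow> ('v \<Rightarrow> 'w set) \<Rightarrow> 'v fm set \<Rightarrow> 'w set set" where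
  "Wf W bx V \<Sigma> = cls W bx V \<Sigma> ` W"

definition Vf :: "'w set \<Rightarrow> ('w set \<Rightarrow> 'w set) \<Rightarrow> ('v \<Rightarrow> 'w set) \<Rightarrow> 'v fm set \<Rightarrow> 'v \<Rightarrow> 'w set set" where
  "Vf W bx V \<Sigma> p = cls W bx V \<Sigma> ` V p"

definition box_min :: "'w set \<Rightarrow> ('w set \<Rightarrow> 'w set) \<Rightarrow> ('v \<Rightarrow> 'w set) \<Rightarrow> 'v fm set \<Rightarrow> 'w set set \<Rightarrow> 'w set set" where
  "box_min W bx V \<Sigma> X =
     (if \<exists>\<phi>. Box \<phi> \<in> \<Sigma> \<and> X = cls W bx V \<Sigma> ` truth W bx V \<phi>
      then cls W bx V \<Sigma> ` truth W bx V (Box (SOME \<phi>. Box \<phi> \<in> \<Sigma> \<and> X = cls W bx V \<Sigma> ` truth W bx V \<phi>))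
      else {})"

definition hat :: "'a set \<Rightarrow> ('a set \<Rightarrow> 'a set) \<Rightarrow> 'a set \<Rightarrow> 'a set" where
  "hat U b X = (if \<exists>Y. Y \<subseteq> U \<and> X = b Y then X else {})"

definition box_trans :: "'w set \<Rightarrow> ('w set \<Rightarrow> 'w set) \<Rightarrow> ('v \<Rightarrow> 'w set) \<Rightarrow> 'v fm set \<Rightarrow> 'w set set \<Rightarrow> 'w set set" where
  "box_trans W bx V \<Sigma> X = box_min W bx V \<Sigma> X \<union> hat (Wf W bx V \<Sigma>) (box_min W bx V \<Sigma>) X"

end

theory Submission
  imports Defs
begin

lemma truth_sub:
  assumes "nbhd_model W bx V" shows "truth W bx V \<phi> \<subseteq> W"
  using assms by (induction \<phi>) (auto simp: nbhd_model_def)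

lemma truth_eq:
  assumes "nbhd_model W bx V" "\<phi> \<in> \<Sigma>" "\<psi> \<in> \<Sigma>"
    and "cls W bx V \<Sigma> ` truth W bx V \<phi> = cls W bx V \<Sigma> ` truth W bx V \<psi>"
  shows "truth W bx V \<phi> = truth W bx V \<psi>"
proof -
  have *: "w \<in> truth W bx V \<chi>"
    if "\<phi>' \<in> \<Sigma>" "\<chi> \<in> \<Sigma>" "cls W bx V \<Sigma> ` truth W bx V \<phi>' = cls W bx V \<Sigma> ` truth W bx V \<chi>"
       "w \<in> truth W bx V \<phi>'" for \<phi>' \<chi> w
  proof -
    have wW: "w \<in> W" using truth_sub[OF assms(1)] that(4) by blast
    from that(3,4) obtain v where v: "v \<in> truth W bx V \<chi>" "cls W bx V \<Sigma> w = cls W bx V \<Sigma> v"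
      by (metis image_eqI imageE)
    have "w \<in> cls W bx V \<Sigma> w" using wW by (simp add: cls_def)
    hence "w \<in> cls W bx V \<Sigma> v" using v by simp
    thus ?thesis using v(1) that(2) by (auto simp: cls_def)
  qed
  show ?thesis using *[of \<phi> \<psi>] *[of \<psi> \<phi>] assms by blast
qed

lemma self_sub: "\<phi> \<in> subformulas \<phi>"
  by (cases \<phi>) auto

theorem mainTheorem7:
  fixes W :: "'w set" and bx :: "'w set \<Rightarrow> 'w set" and V :: "'v \<Rightarrow> 'w set" and \<Sigma> :: "'v fm set"
  assumes "nbhd_model W bx V"
    and "transitive_model W bx"
    and "subformula_closed \<Sigma>"
  shows "\<forall>X. X \<subseteq> Wf W bx V \<Sigma> \<longrightarrow>
           box_trans W bx V \<Sigma> X \<subseteq> box_trans W bx V \<Sigma> (box_trans W bx V \<Sigma> X)"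
proof (intro allI impI)
  fix X assume XW: "X \<subseteq> Wf W bx V \<Sigma>"
  let ?c = "cls W bx V \<Sigma>"
  let ?B = "box_min W bx V \<Sigma>"
  let ?T = "box_trans W bx V \<Sigma>"
  let ?t = "truth W bx V"
  have sub: "\<psi> \<in> \<Sigma>" if "Box \<psi> \<in> \<Sigma>" for \<psi>
    using assms(3) that unfolding subformula_closed_def using self_sub[of \<psi>] by force
  have hatB: "hat (Wf W bx V \<Sigma>) ?B (?B X) = ?B X"
    using XW unfolding hat_def by auto
  show "?T X \<subseteq> ?T (?T X)"
  proof (cases "\<exists>\<phi>. Box \<phi> \<in> \<Sigma> \<and> X = ?c ` ?t \<phi>")
    case True
    define \<psi> where "\<psi> = (SOME \<phi>. Box \<phi> \<in> \<Sigma> \<and> X = ?c ` ?t \<phi>)"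
    have psi: "Box \<psi> \<in> \<Sigma>" "X = ?c ` ?t \<psi>"
      using someI_ex[OF True] unfolding \<psi>_def by auto
    have BX: "?B X = ?c ` ?t (Box \<psi>)"
      using True unfolding box_min_def \<psi>_def by simp
    have "hat (Wf W bx V \<Sigma>) ?B X \<subseteq> ?B X"
    proof (cases "\<exists>Y. Y \<subseteq> Wf W bx V \<Sigma> \<and> X = ?B Y")
      case True
      then obtain Y where Y: "X = ?B Y" by blast
      show ?thesis
      proof (cases "\<exists>\<phi>. Box \<phi> \<in> \<Sigma> \<and> Y = ?c ` ?t \<phi>")
        case True
        define \<chi> where "\<chi> = (SOME \<phi>. Box \<phi> \<in> \<Sigma> \<and> Y = ?c ` ?t \<phi>)"
        have chi: "Box \<chi> \<in> \<Sigma>"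
          using someI_ex[OF True] unfolding \<chi>_def by auto
        have BY: "?B Y = ?c ` ?t (Box \<chi>)"
          using True unfolding box_min_def \<chi>_def by simp
        have eq: "?t \<psi> = ?t (Box \<chi>)"
          using truth_eq[OF assms(1) sub[OF psi(1)] chi] psi(2) Y BY by simp
        have "bx (?t \<chi>) \<subseteq> bx (bx (?t \<chi>))"
          using assms(2) truth_sub[OF assms(1)] unfolding transitive_model_def by blast
        hence "X \<subseteq> ?B X" using BX psi(2) eq by auto
        thus ?thesis unfolding hat_def by auto
      next
        case False
        hence "X = {}" using Y unfolding box_min_def by auto
        thus ?thesis unfolding hat_def by auto
      qed
    next
      case False
      thus ?thesis unfolding hat_def by auto
    qed
    hence TX: "?T X = ?B X" unfolding box_trans_def by auto
    show ?thesis unfolding TX by (subst box_trans_def, simp add: hatB)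
  next
    case False
    hence B0: "?B X = {}" unfolding box_min_def by auto
    show ?thesis
    proof (cases "\<exists>Y. Y \<subseteq> Wf W bx V \<Sigma> \<and> X = ?B Y")
      case True
      hence "?T X = X" unfolding box_trans_def hat_def using B0 by simp
      thus ?thesis by simp
    next
      case False
      hence "?T X = {}" unfolding box_trans_def hat_def using B0 by auto
      thus ?thesis by simp
    qed
  qed
qed

end
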